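(* Let $f$, $X_n$, $Y_m$ be as in the context. If $n\geq 2$ and $m<n$, then every map $VX_n\to VY_m$ has some fibre containing at least $f(n)$ vertices; in particular there is no coarse $(f(n)-1)$-wiring of $X_n$ into $Y_m$.
   Context: Fix a function $f:\mathbb{N}\to\mathbb{N}$ (with $\mathbb{N}=\{1,2,\dots\}$) that is surjective, satisfies $f(1)=1$, $2\leq f(n)\leq n$ for all $n\geq 2$, and $|f^{-1}(k)|=\infty$ for every $k\geq 2$. For $n\in\mathbb{N}$ let $X_n$ be the graph with vertex set $\{0,1,\dots,f(n)-1\}\times\{0,1,\dots,2^{2^{2n}}f(n)\}$, with edges $(i,j)(i,j+1)$ for all $0\leq i\leq f(n)-1$, $0\leq j\leq 2^{2^{2n}}f(n)-1$, and $(i,j)(i+1,j)$ for all $0\leq i\leq f(n)-2$ and all $j$ that are multiples of $2^{2^{2n}}$. Let $Y_n$ be defined in the same way with $2^{2^{2n}}$ replaced everywhere by $2^{2^{2n+1}}$. A coarse $k$-wiring of a finite graph $\Gamma$ into a graph $Y$ is a continuous map sending vertices to vertices and edges onto unions of edges, such that each vertex of $Y$ has at most $k$ preimage vertices and each edge of $Y$ lies in the images of at most $k$ edges of $\Gamma$. *)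

theory Defs
  imports Main
begin

text \<open>Finite graphs are given by a vertex set V and an edge set E of
  two-element subsets of V.\<close>

definition ladderV :: "nat \<Rightarrow> nat \<Rightarrow> (nat \<times> nat) set" where
  "ladderV c s = {0..<c} \<times> {0..s * c}"

definition ladderE :: "nat \<Rightarrow> nat \<Rightarrow> (nat \<times> nat) set set" where
  "ladderE c s =
     {{(i, j), (i, j + 1)} | i j. i < c \<and> j < s * c}
   \<union> {{(i, j), (i + 1, j)} | i j. i + 1 < c \<and> j \<le> s * c \<and> s dvd j}"

definition XV :: "(nat \<Rightarrow> nat) \<Rightarrow> nat \<Rightarrow> (nat \<times> nat) set" where
  "XV f n = ladderV (f n) (2 ^ (2 ^ (2 * n)))"
definition XE :: "(nat \<Rightarrow> nat) \<Rightarrow> nat \<Rightarrow> (nat \<times> nat) set set" where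
  "XE f n = ladderE (f n) (2 ^ (2 ^ (2 * n)))"
definition YV :: "(nat \<Rightarrow> nat) \<Rightarrow> nat \<Rightarrow> (nat \<times> nat) set" where
  "YV f n = ladderV (f n) (2 ^ (2 ^ (2 * n + 1)))"
definition YE :: "(nat \<Rightarrow> nat) \<Rightarrow> nat \<Rightarrow> (nat \<times> nat) set set" where
  "YE f n = ladderE (f n) (2 ^ (2 ^ (2 * n + 1)))"

text \<open>A walk in (V,E): a vertex list of length at least 2 (so the image of an
  edge is a nonempty union of edges) with consecutive vertices adjacent.\<close>

definition is_walk :: "'b set \<Rightarrow> 'b set set \<Rightarrow> 'b list \<Rightarrow> bool" where
  "is_walk V E p \<longleftrightarrow> 2 \<le> length p \<and> set p \<subseteq> V \<and>
     (\<forall>i. Suc i < length p \<longrightarrow> {p ! i, p ! Suc i} \<in> E)"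

definition walk_edges :: "'b list \<Rightarrow> 'b set set" where
  "walk_edges p = {{p ! i, p ! Suc i} | i. Suc i < length p}"

text \<open>Coarse k-wiring of (VG,EG) into (VH,EH): a vertex map phi and, for each
  edge uv, a walk from phi u to phi v (the image of the edge, a union of edges),
  such that every vertex of H has at most k preimage vertices and every edge of
  H lies in the images of at most k edges of G.\<close>

definition coarse_wiring ::
  "nat \<Rightarrow> 'a set \<Rightarrow> 'a set set \<Rightarrow> 'b set \<Rightarrow> 'b set set \<Rightarrow> bool" where
  "coarse_wiring k VG EG VH EH \<longleftrightarrow>
    (\<exists>(\<phi> :: 'a \<Rightarrow> 'b) (P :: 'a set \<Rightarrow> 'b list).
       \<phi> ` VG \<subseteq> VH \<and>
       (\<forall>e \<in> EG. is_walk VH EH (P e)) \<and>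
       (\<forall>u v. {u, v} \<in> EG \<longrightarrow>
          (hd (P {u, v}) = \<phi> u \<and> last (P {u, v}) = \<phi> v) \<or>
          (hd (P {u, v}) = \<phi> v \<and> last (P {u, v}) = \<phi> u)) \<and>
       (\<forall>y \<in> VH. card {x \<in> VG. \<phi> x = y} \<le> k) \<and>
       (\<forall>e \<in> EH. card {d \<in> EG. e \<in> walk_edges (P d)} \<le> k))"

end

theory Submission
  imports Defs
begin

lemma card_ladderV: "card (ladderV c s) = c * (s * c + 1)"
  unfolding ladderV_def by (simp add: card_cartesian_product)

lemma pow4: "2 * n^2 \<le> (4::nat)^n"
proof (induction n)
  case 0 then show ?case by simp
next
  case (Suc n)
  show ?case
  proof (cases "n \<le> 2")
    case True
    then have "n = 0 \<or> n = 1 \<or> n = 2" by auto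
    then show ?thesis by (auto simp: power2_eq_square)
  next
    case False
    have "2 * (Suc n)^2 = 2*n^2 + 4*n + 2" by (simp add: power2_eq_square)
    also have "\<dots> \<le> 4 * (2*n^2)" proof -
      have "3 \<le> n" using False by simp
      then have "3 * n \<le> n * n" by (intro mult_le_mono1)
      then show ?thesis unfolding power2_eq_square using \<open>3 \<le> n\<close> by linarith
    qed
    also have "\<dots> \<le> 4 * 4^n" using Suc by simp
    finally show ?thesis by simp
  qed
qed

lemma key_arith:
  fixes n m c d :: nat
  assumes "m < n" "d \<le> n" "c \<ge> 1" "n \<ge> 2"
  shows "(c - 1) * (d * (2 ^ (2 ^ (2 * m + 1)) * d + 1)) < c * (2 ^ (2 ^ (2 * n)) * c + 1)"
proof -
  define k where "k = 2*n - 1"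
  define t :: nat where "t = 2 ^ (2 ^ (2 * m + 1))"
  define u :: nat where "u = 2 ^ (2 ^ k)"
  define s :: nat where "s = 2 ^ (2 ^ (2 * n))"
  have mk: "2*m+1 \<le> k" using assms unfolding k_def by simp
  have tu: "t \<le> u" unfolding t_def u_def using mk
    by (intro power_increasing) auto
  have su: "s = u * u" unfolding s_def u_def
  proof -
    have "2 * n = Suc k" unfolding k_def using assms by simp
    then have "(2::nat) ^ (2 * n) = 2^k + 2^k" by simp
    then show "(2::nat) ^ 2 ^ (2 * n) = 2 ^ 2 ^ k * 2 ^ 2 ^ k" by (simp add: power_add)
  qed
  have "2 * n \<le> 2 ^ k"
  proof -
    have "k < 2^k" by (rule less_exp)
    moreover have "2 * n = k + 1" unfolding k_def using assms by simp
    ultimately show ?thesis by linarith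
  qed
  then have "(2::nat) ^ (2*n) \<le> u" unfolding u_def by (intro power_increasing) auto
  then have nu: "2 * n^2 \<le> u" using pow4[of n] by (simp add: power_mult)
  have u1: "u \<ge> 1" unfolding u_def by simp
  have "d * (t * d + 1) \<le> n * (u * n + 1)"
    using assms tu by (intro mult_mono add_mono) auto
  also have "\<dots> \<le> 2 * n^2 * u" using u1 by (simp add: power2_eq_square algebra_simps)
  also have "\<dots> \<le> u * u" using nu by simp
  finally have A: "d * (t * d + 1) \<le> s" using su by simp
  have "(c - 1) * (d * (t * d + 1)) \<le> (c - 1) * s" using A by simp
  also have "\<dots> < c * (s * c + 1)"
  proof -
    have "(c-1) * s \<le> c * s" by simp
    also have "\<dots> \<le> c * s * c" using assms by simp
    finally have "(c-1) * s \<le> c * s * c" .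
    then show ?thesis using assms by (simp add: algebra_simps)
  qed
  finally show ?thesis unfolding t_def s_def .
qed

theorem mainTheorem3:
  fixes f :: "nat \<Rightarrow> nat" and n m :: nat
  assumes f_surj: "\<forall>k \<ge> 1. \<exists>j \<ge> 1. f j = k"
    and f_one: "f 1 = 1"
    and f_bounds: "\<forall>j \<ge> 2. 2 \<le> f j \<and> f j \<le> j"
    and f_fibres: "\<forall>k \<ge> 2. infinite {j. j \<ge> 1 \<and> f j = k}"
    and n_ge: "n \<ge> 2" and m_ge: "m \<ge> 1" and mn: "m < n"
  shows "(\<forall>\<phi> :: nat \<times> nat \<Rightarrow> nat \<times> nat. \<phi> ` XV f n \<subseteq> YV f m \<longrightarrow>
            (\<exists>y \<in> YV f m. f n \<le> card {x \<in> XV f n. \<phi> x = y}))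
         \<and> \<not> coarse_wiring (f n - 1) (XV f n) (XE f n) (YV f m) (YE f m)"
proof -
  have fn: "f n \<ge> 2" using f_bounds n_ge by auto
  have fm: "f m \<le> n"
  proof (cases "m = 1")
    case True then show ?thesis using f_one n_ge by simp
  next
    case False
    then have "m \<ge> 2" using m_ge by simp
    then have "f m \<le> m" using f_bounds by simp
    then show ?thesis using mn by simp
  qed
  have finX: "finite (XV f n)" and finY: "finite (YV f m)"
    unfolding XV_def YV_def ladderV_def by auto
  have ineq: "(f n - 1) * card (YV f m) < card (XV f n)"
    unfolding XV_def YV_def card_ladderV
    using key_arith[OF mn fm, of "f n"] fn n_ge by simp
  have P1: "\<exists>y \<in> YV f m. f n \<le> card {x \<in> XV f n. \<phi> x = y}"
    if sub: "\<phi> ` XV f n \<subseteq> YV f m" for \<phi> :: "nat \<times> nat \<Rightarrow> nat \<times> nat"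
  proof (rule ccontr)
    assume "\<not> ?thesis"
    then have le: "\<forall>y \<in> YV f m. card {x \<in> XV f n. \<phi> x = y} \<le> f n - 1" by auto
    have "card (XV f n) = (\<Sum>y\<in>YV f m. card {x \<in> XV f n. \<phi> x = y})"
      using sum.group[OF finX finY sub, of "\<lambda>_. 1::nat"] by simp
    also have "\<dots> \<le> (\<Sum>y\<in>YV f m. f n - 1)" using le by (intro sum_mono) auto
    also have "\<dots> = (f n - 1) * card (YV f m)" by simp
    finally show False using ineq by simp
  qed
  have P2: "\<not> coarse_wiring (f n - 1) (XV f n) (XE f n) (YV f m) (YE f m)"
  proof
    assume "coarse_wiring (f n - 1) (XV f n) (XE f n) (YV f m) (YE f m)"
    then obtain \<phi> :: "nat \<times> nat \<Rightarrow> nat \<times> nat" where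
      sub: "\<phi> ` XV f n \<subseteq> YV f m" and
      le: "\<forall>y \<in> YV f m. card {x \<in> XV f n. \<phi> x = y} \<le> f n - 1"
      unfolding coarse_wiring_def by blast
    from P1[OF sub] le fn show False by force
  qed
  show ?thesis using P1 P2 by blast
qed

end
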